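(* Let $0<\alpha<d$, let $\mathrm{M}_\alpha\in\{\mathrm{M}^c_\alpha,\mathrm{M}^u_\alpha\}$, and let $f\in L^\infty(\mathbb{R}^d)$ have bounded variation. Then $\mathrm{M}_\alpha f$ is locally Lipschitz.
   Context: $f_B=\frac1{|B|}\int_B|f|$ and $r(B)$ is the radius of a ball $B$. $\mathrm{M}^c_\alpha f(x)=\sup_{r>0}r^\alpha f_{B(x,r)}$ (centered fractional maximal function), $\mathrm{M}^u_\alpha f(x)=\sup_{B\ni x}r(B)^\alpha f_B$ over all balls containing $x$ (uncentered). *)

theory Defs
  imports "HOL-Analysis.Analysis"
begin

definition avg_abs :: "('a::euclidean_space \<Rightarrow> real) \<Rightarrow> 'a set \<Rightarrow> real" where
  "avg_abs f B = (LINT y:B|lebesgue. \<bar>f y\<bar>) / measure lebesgue B"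

definition frac_max_centered :: "real \<Rightarrow> ('a::euclidean_space \<Rightarrow> real) \<Rightarrow> 'a \<Rightarrow> ereal" where
  "frac_max_centered \<alpha> f x = (SUP r\<in>{0<..}. ereal (r powr \<alpha> * avg_abs f (ball x r)))"

definition frac_max_uncentered :: "real \<Rightarrow> ('a::euclidean_space \<Rightarrow> real) \<Rightarrow> 'a \<Rightarrow> ereal" where
  "frac_max_uncentered \<alpha> f x =
     (SUP (c, r)\<in>{(c, r). 0 < r \<and> x \<in> ball c r}. ereal (r powr \<alpha> * avg_abs f (ball c r)))"

definition divergence :: "('a::euclidean_space \<Rightarrow> 'a) \<Rightarrow> 'a \<Rightarrow> real" where
  "divergence \<phi> x = (\<Sum>i\<in>Basis. frechet_derivative \<phi> (at x) i \<bullet> i)"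

definition test_field :: "('a::euclidean_space \<Rightarrow> 'a) \<Rightarrow> bool" where
  "test_field \<phi> \<longleftrightarrow>
     (\<forall>x. \<phi> differentiable (at x)) \<and>
     (\<forall>i\<in>Basis. continuous_on UNIV (\<lambda>x. frechet_derivative \<phi> (at x) i)) \<and>
     compact (closure {x. \<phi> x \<noteq> 0}) \<and>
     (\<forall>x. norm (\<phi> x) \<le> 1)"

definition finite_variation :: "('a::euclidean_space \<Rightarrow> real) \<Rightarrow> bool" where
  "finite_variation f \<longleftrightarrow>
     (\<exists>C. \<forall>\<phi>. test_field \<phi> \<longrightarrow> (LINT x|lebesgue. f x * divergence \<phi> x) \<le> C)"

definition bounded_variation :: "('a::euclidean_space \<Rightarrow> real) \<Rightarrow> bool" where
  "bounded_variation f \<longleftrightarrow> integrable lebesgue f \<and> finite_variation f"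

definition essentially_bounded :: "('a::euclidean_space \<Rightarrow> real) \<Rightarrow> bool" where
  "essentially_bounded f \<longleftrightarrow> f \<in> borel_measurable lebesgue \<and> (\<exists>C. AE x in lebesgue. \<bar>f x\<bar> \<le> C)"

definition locally_lipschitz :: "('a::metric_space \<Rightarrow> real) \<Rightarrow> bool" where
  "locally_lipschitz g \<longleftrightarrow> (\<forall>x. \<exists>e>0. \<exists>L. L-lipschitz_on (ball x e) g)"

end

theory Submission
  imports Defs
begin


lemma one_minus_pow_le:
  fixes t :: real
  assumes "0 \<le> t" "t \<le> 1"
  shows "1 - t ^ N \<le> real N * (1 - t)"
proof (induction N)
  case 0 then show ?case by simp
next
  case (Suc N)
  have "t ^ N * (1 - t) \<le> 1 - t"
    using assms by (simp add: mult_left_le_one_le power_le_one)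
  then have "1 - t ^ Suc N = (1 - t ^ N) + t ^ N * (1 - t)" by (simp add: algebra_simps)
  also have "\<dots> \<le> real N * (1 - t) + (1 - t)" using Suc \<open>t ^ N * (1 - t) \<le> 1 - t\<close> by linarith
  finally show ?case by (simp add: algebra_simps)
qed

lemma sup_lipschitz_generic:
  fixes V :: "'i \<Rightarrow> real" and I :: "'x::metric_space \<Rightarrow> 'i set" and rad :: "'i \<Rightarrow> real"
  assumes ne: "\<And>x. I x \<noteq> {}"
    and Vnn: "\<And>x i. i \<in> I x \<Longrightarrow> 0 \<le> V i"
    and Vbd: "\<And>x i. i \<in> I x \<Longrightarrow> V i \<le> B"
    and radpos: "\<And>x i. i \<in> I x \<Longrightarrow> 0 < rad i"
    and small: "\<And>\<epsilon>. \<epsilon> > 0 \<Longrightarrow> \<exists>\<delta>>0. \<forall>x. \<forall>i\<in>I x. rad i < \<delta> \<longrightarrow> V i < \<epsilon>"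
    and transfer: "\<And>x y i. i \<in> I x \<Longrightarrow> \<exists>j\<in>I y. (rad i / (rad i + dist x y)) ^ N * V i \<le> V j"
    and pos: "(\<forall>x. \<forall>i\<in>I x. V i = 0) \<or> (\<forall>x. \<exists>i\<in>I x. 0 < V i)"
  shows "(\<forall>x. \<bar>SUP i\<in>I x. ereal (V i)\<bar> \<noteq> \<infinity>) \<and>
         locally_lipschitz (\<lambda>x. real_of_ereal (SUP i\<in>I x. ereal (V i)))"
proof -
  define s where "s x = (SUP i\<in>I x. V i)" for x
  have bdd: "bdd_above (V ` I x)" for x using Vbd by (auto intro!: bdd_aboveI[of _ B])
  have upper: "V i \<le> s x" if "i \<in> I x" for i x
    unfolding s_def using bdd that by (rule cSUP_upper2) simp
  have least: "s x \<le> c" if "\<And>i. i \<in> I x \<Longrightarrow> V i \<le> c" for x c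
    unfolding s_def using ne that by (rule cSUP_least)
  have B0: "0 \<le> B" using ne Vnn Vbd by (meson all_not_in_conv order_trans)
  have fin: "\<bar>SUP i\<in>I x. ereal (V i)\<bar> \<noteq> \<infinity>" for x
  proof -
    obtain i where i: "i \<in> I x" using ne by blast
    have "(SUP i\<in>I x. ereal (V i)) \<le> ereal B" using Vbd by (auto intro: SUP_least)
    moreover have "ereal (V i) \<le> (SUP i\<in>I x. ereal (V i))" using i by (rule SUP_upper)
    ultimately show ?thesis by auto
  qed
  have eq: "real_of_ereal (SUP i\<in>I x. ereal (V i)) = s x" for x
    using ereal_SUP[OF fin[of x]] unfolding s_def by (metis real_of_ereal.simps(1))
  have "locally_lipschitz s"
    unfolding locally_lipschitz_def
  proof
    fix x0
    show "\<exists>e>0. \<exists>L. L-lipschitz_on (ball x0 e) s"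
      using pos
    proof
      assume z: "\<forall>x. \<forall>i\<in>I x. V i = 0"
      have "s x = 0" for x
      proof -
        obtain i where i: "i \<in> I x" using ne by blast
        show ?thesis using least[of x 0] upper[OF i] z i by force
      qed
      then have "0-lipschitz_on (ball x0 1) s" by (intro lipschitz_onI) auto
      then show ?thesis by (intro exI[of _ 1]) auto
    next
      assume p: "\<forall>x. \<exists>i\<in>I x. 0 < V i"
      then obtain i0 where i0: "i0 \<in> I x0" "0 < V i0" by blast
      define r1 where "r1 = rad i0"
      have r1: "0 < r1" using radpos i0 r1_def by auto
      define m where "m = (1/2) ^ N * V i0"
      have m0: "0 < m" using i0 by (simp add: m_def)
      have sy: "m \<le> s y" if "y \<in> ball x0 r1" for y
      proof -
        obtain j where j: "j \<in> I y" "(r1 / (r1 + dist x0 y)) ^ N * V i0 \<le> V j"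
          using transfer[OF i0(1), of y] r1_def by blast
        have d: "dist x0 y < r1" using that by simp
        have pp: "0 < r1 + dist x0 y" using r1 zero_le_dist[of x0 y] by linarith
        have "1/2 \<le> r1 / (r1 + dist x0 y)" using d pp by (simp add: divide_simps)
        then have "(1/2) ^ N \<le> (r1 / (r1 + dist x0 y)) ^ N" by (rule power_mono) simp
        then have "m \<le> (r1 / (r1 + dist x0 y)) ^ N * V i0"
          unfolding m_def using i0 by (simp add: mult_right_mono)
        also have "\<dots> \<le> V j" by (rule j(2))
        also have "\<dots> \<le> s y" using upper[OF j(1)] .
        finally show ?thesis .
      qed
      obtain \<delta> where \<delta>: "\<delta> > 0" "\<forall>x. \<forall>i\<in>I x. rad i < \<delta> \<longrightarrow> V i < m/2"
        using small[of "m/2"] m0 by auto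
      define L where "L = real N * B / \<delta>"
      have L0: "0 \<le> L" unfolding L_def using B0 \<delta> by simp
      have one: "s x \<le> s y + L * dist x y" if "x \<in> ball x0 r1" "y \<in> ball x0 r1" for x y
      proof (rule least)
        fix i assume i: "i \<in> I x"
        show "V i \<le> s y + L * dist x y"
        proof (cases "V i < m/2")
          case True
          have "0 \<le> L * dist x y" using L0 by simp
          then show ?thesis using sy[OF that(2)] m0 True by linarith
        next
          case False
          then have rd: "\<delta> \<le> rad i" using \<delta>(2) i by force
          define h where "h = dist x y"
          have h0: "0 \<le> h" by (simp add: h_def)
          define t where "t = rad i / (rad i + h)"
          obtain j where j: "j \<in> I y" "t ^ N * V i \<le> V j"
            using transfer[OF i, of y] unfolding t_def h_def by blast
          have rp: "0 < rad i" using radpos[OF i] .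
          have t0: "0 \<le> t" "t \<le> 1" unfolding t_def using rp h0 by auto
          have omt: "1 - t = h / (rad i + h)" unfolding t_def using rp h0 by (simp add: field_simps)
          have "h / (rad i + h) \<le> h / \<delta>"
            using rd h0 \<delta>(1) by (intro divide_left_mono) auto
          then have omt2: "1 - t \<le> h / \<delta>" using omt by simp
          have a: "0 \<le> 1 - t ^ N" using t0 by (simp add: power_le_one)
          have "V i - V j \<le> (1 - t ^ N) * V i" using j(2) by (simp add: algebra_simps)
          also have "\<dots> \<le> (real N * (1 - t)) * B"
            using one_minus_pow_le[OF t0, of N] a Vbd[OF i] Vnn[OF i]
            by (intro mult_mono) auto
          also have "\<dots> \<le> (real N * (h / \<delta>)) * B"
            using omt2 B0 by (intro mult_right_mono mult_left_mono) auto
          also have "\<dots> = L * h" unfolding L_def by simp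
          finally show ?thesis using upper[OF j(1)] unfolding h_def by linarith
        qed
      qed
      have "L-lipschitz_on (ball x0 r1) s"
      proof (rule lipschitz_onI)
        fix x y assume "x \<in> ball x0 r1" "y \<in> ball x0 r1"
        then show "dist (s x) (s y) \<le> L * dist x y"
          using one[of x y] one[of y x] by (simp add: dist_real_def dist_commute abs_le_iff)
      qed (rule L0)
      then show ?thesis using r1 by blast
    qed
  qed
  then show ?thesis using fin eq by simp
qed



lemma meas_ball: "0 \<le> r \<Longrightarrow> measure lebesgue (ball (c::'a::euclidean_space) r) = unit_ball_vol (DIM('a)) * r ^ DIM('a)"
  using content_ball by auto

lemma ball_sets: "ball (c::'a::euclidean_space) r \<in> sets lebesgue"
  by (simp add: fmeasurableD lmeasurable_ball)

lemma ball_fin: "emeasure lebesgue (ball (c::'a::euclidean_space) r) < \<infinity>"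
  using lmeasurable_ball by (simp add: fmeasurable_def)

lemma int_nonneg: "0 \<le> (LINT y:A|lebesgue. \<bar>(f::'a::euclidean_space \<Rightarrow> real) y\<bar>)"
  unfolding set_lebesgue_integral_def by (rule Bochner_Integration.integral_nonneg_AE) (simp add: indicator_def)

lemma int_mono_set:
  fixes f :: "'a::euclidean_space \<Rightarrow> real"
  assumes fi: "integrable lebesgue f" and A: "A \<in> sets lebesgue" and B: "B \<in> sets lebesgue" and "A \<subseteq> B"
  shows "(LINT y:A|lebesgue. \<bar>f y\<bar>) \<le> (LINT y:B|lebesgue. \<bar>f y\<bar>)"
  unfolding set_lebesgue_integral_def
proof (rule integral_mono)
  show "integrable lebesgue (\<lambda>x. indicat_real A x *\<^sub>R \<bar>f x\<bar>)"
    using integrable_mult_indicator[OF A integrable_abs[OF fi]] by simp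
  show "integrable lebesgue (\<lambda>x. indicat_real B x *\<^sub>R \<bar>f x\<bar>)"
    using integrable_mult_indicator[OF B integrable_abs[OF fi]] by simp
  fix x show "indicat_real A x *\<^sub>R \<bar>f x\<bar> \<le> indicat_real B x *\<^sub>R \<bar>f x\<bar>"
    using assms(4) by (auto simp: indicator_def)
qed

lemma int_le_total:
  fixes f :: "'a::euclidean_space \<Rightarrow> real"
  assumes fi: "integrable lebesgue f" and A: "A \<in> sets lebesgue"
  shows "(LINT y:A|lebesgue. \<bar>f y\<bar>) \<le> (LINT y|lebesgue. \<bar>f y\<bar>)"
  unfolding set_lebesgue_integral_def
proof (rule integral_mono)
  show "integrable lebesgue (\<lambda>x. indicat_real A x *\<^sub>R \<bar>f x\<bar>)"
    using integrable_mult_indicator[OF A integrable_abs[OF fi]] by simp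
  show "integrable lebesgue (\<lambda>x. \<bar>f x\<bar>)" using integrable_abs[OF fi] .
  fix x show "indicat_real A x *\<^sub>R \<bar>f x\<bar> \<le> \<bar>f x\<bar>"
    by (auto simp: indicator_def)
qed

lemma int_le_C:
  fixes f :: "'a::euclidean_space \<Rightarrow> real"
  assumes fi: "integrable lebesgue f" and Cb: "AE x in lebesgue. \<bar>f x\<bar> \<le> C"
    and A: "A \<in> sets lebesgue" and Af: "emeasure lebesgue A < \<infinity>"
  shows "(LINT y:A|lebesgue. \<bar>f y\<bar>) \<le> C * measure lebesgue A"
proof -
  have "(LINT y:A|lebesgue. \<bar>f y\<bar>) \<le> (LINT y|lebesgue. indicator A y * C)"
    unfolding set_lebesgue_integral_def
  proof (rule integral_mono_AE)
    show "integrable lebesgue (\<lambda>x. indicat_real A x *\<^sub>R \<bar>f x\<bar>)"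
      using integrable_mult_indicator[OF A integrable_abs[OF fi]] by simp
    show "integrable lebesgue (\<lambda>y. indicat_real A y * C)"
      using A Af by (intro integrable_mult_left integrable_real_indicator) auto
    show "AE x in lebesgue. indicat_real A x *\<^sub>R \<bar>f x\<bar> \<le> indicat_real A x * C"
      using Cb by eventually_elim (auto simp: indicator_def)
  qed
  also have "\<dots> = C * measure lebesgue A"
    using A Af by (simp add: integral_mult_left_zero)
  finally show ?thesis .
qed



lemma mem_unc: "i \<in> {(c, r). 0 < r \<and> x \<in> ball c r} \<longleftrightarrow> 0 < snd i \<and> x \<in> ball (fst i) (snd i)"
  by (cases i) simp
lemma mem_cent: "i \<in> (\<lambda>r. (x, r)) ` {0<..} \<longleftrightarrow> 0 < snd i \<and> fst i = x"
  by (cases i) auto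
lemma ne_cent: "(\<lambda>r. (x, r)) ` {0::real<..} \<noteq> {}"
proof -
  have "(x, 1::real) \<in> (\<lambda>r. (x, r)) ` {0<..}" unfolding mem_cent by simp
  then show ?thesis by blast
qed
lemma ne_unc: "{(c, r::real). 0 < r \<and> x \<in> ball c r} \<noteq> {}"
proof -
  have "(x, 1::real) \<in> {(c, r::real). 0 < r \<and> x \<in> ball c r}" unfolding mem_unc by simp
  then show ?thesis by blast
qed

theorem lemma2p3:
  fixes f :: "'a::euclidean_space \<Rightarrow> real" and \<alpha> :: real
  assumes "0 < \<alpha>" and "\<alpha> < real DIM('a)"
    and "essentially_bounded f"
    and "bounded_variation f"
  shows "((\<forall>x. \<bar>frac_max_centered \<alpha> f x\<bar> \<noteq> \<infinity>) \<and>
           locally_lipschitz (\<lambda>x. real_of_ereal (frac_max_centered \<alpha> f x))) \<and>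
         ((\<forall>x. \<bar>frac_max_uncentered \<alpha> f x\<bar> \<noteq> \<infinity>) \<and>
           locally_lipschitz (\<lambda>x. real_of_ereal (frac_max_uncentered \<alpha> f x)))"
proof -
  have a0: "0 < \<alpha>" and ad: "\<alpha> < real DIM('a)" using assms(1,2) .
  obtain C0 where C0: "AE x in lebesgue. \<bar>f x\<bar> \<le> C0"
    using assms(3) unfolding essentially_bounded_def by blast
  define C where "C = max C0 1"
  have Cb: "AE x in lebesgue. \<bar>f x\<bar> \<le> C" using C0 by eventually_elim (auto simp: C_def)
  have Cpos: "0 < C" by (simp add: C_def)
  have fi: "integrable lebesgue f" using assms(4) unfolding bounded_variation_def by blast
  define d where "d = DIM('a)"
  define \<omega> where "\<omega> = unit_ball_vol (real d)"
  have \<omega>pos: "0 < \<omega>" unfolding \<omega>_def by simp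
  define K where "K = (LINT y|lebesgue. \<bar>f y\<bar>)"
  define Ib where "Ib c r = (LINT y:ball c r|lebesgue. \<bar>f y\<bar>)" for c r
  have Ib0: "0 \<le> Ib c r" for c r unfolding Ib_def by (rule int_nonneg)
  have IbK: "Ib c r \<le> K" for c r unfolding Ib_def K_def using int_le_total[OF fi ball_sets] .
  have mb: "measure lebesgue (ball c r) = \<omega> * r ^ d" if "0 \<le> r" for c :: 'a and r
    unfolding \<omega>_def d_def using meas_ball[OF that] by simp
  have IbC: "Ib c r \<le> C * (\<omega> * r ^ d)" if "0 \<le> r" for c r
  proof -
    have "Ib c r \<le> C * measure lebesgue (ball c r)"
      unfolding Ib_def by (rule int_le_C[OF fi Cb ball_sets ball_fin])
    then show ?thesis using mb[OF that, of c] by metis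
  qed
  define V where "V = (\<lambda>(c::'a, r::real). r powr \<alpha> * avg_abs f (ball c r))"
  have Veq: "V (c, r) = r powr \<alpha> * (Ib c r / (\<omega> * r ^ d))" if "0 \<le> r" for c r
    unfolding V_def avg_abs_def Ib_def using mb[OF that] by (simp add: Ib_def)
  have Vnn: "0 \<le> V (c, r)" if "0 < r" for c r
    using Veq[of r c] that Ib0[of c r] \<omega>pos by simp
  have VC: "V (c, r) \<le> C * r powr \<alpha>" if "0 < r" for c r
  proof -
    have p: "0 < \<omega> * r ^ d" using \<omega>pos that by simp
    have "Ib c r / (\<omega> * r ^ d) \<le> C" using IbC[of r c] that p by (simp add: divide_simps)
    then have "r powr \<alpha> * (Ib c r / (\<omega> * r ^ d)) \<le> r powr \<alpha> * C"
      by (intro mult_left_mono) auto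
    then show ?thesis using Veq[of r c] that by (simp add: mult.commute)
  qed
  define Bd where "Bd = max C (K / \<omega>)"
  have Vbd: "V (c, r) \<le> Bd" if "0 < r" for c r
  proof (cases "r \<le> 1")
    case True
    have "r powr \<alpha> \<le> 1" using True that a0 by (intro powr_le1) auto
    then have "C * r powr \<alpha> \<le> C" using Cpos by (simp add: mult_left_le)
    then show ?thesis using VC[OF that, of c] unfolding Bd_def by linarith
  next
    case False
    have p: "0 < \<omega> * r ^ d" using \<omega>pos that by simp
    have "r powr \<alpha> \<le> r powr (real d)" using False ad unfolding d_def by (intro powr_mono) auto
    also have "\<dots> = r ^ d" using that by (simp add: powr_realpow)
    finally have rr: "r powr \<alpha> \<le> r ^ d" .
    have "V (c, r) = r powr \<alpha> * Ib c r / (\<omega> * r ^ d)" using Veq[of r c] that by simp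
    also have "\<dots> \<le> r ^ d * K / (\<omega> * r ^ d)"
      using p rr IbK[of c r] Ib0[of c r] that
      by (intro divide_right_mono mult_mono) auto
    also have "\<dots> = K / \<omega>" using that by simp
    finally show ?thesis unfolding Bd_def by linarith
  qed
  have Vtr: "(r / R) ^ d * V (c, r) \<le> V (c', R)" if "0 < r" "r \<le> R" "ball c r \<subseteq> ball c' R" for c c' r R
  proof -
    have R0: "0 < R" using that by linarith
    have "(r / R) ^ d * V (c, r) = r powr \<alpha> * Ib c r / (\<omega> * R ^ d)"
      using Veq[of r c] that \<omega>pos R0 by (simp add: power_divide field_simps)
    also have "\<dots> \<le> R powr \<alpha> * Ib c' R / (\<omega> * R ^ d)"
      using \<omega>pos R0 that a0 Ib0[of c r] int_mono_set[OF fi ball_sets ball_sets that(3)]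
      by (intro divide_right_mono mult_mono powr_mono2) (auto simp: Ib_def)
    also have "\<dots> = V (c', R)" using Veq[of R c'] R0 by simp
    finally show ?thesis .
  qed
  have small: "\<exists>\<delta>>0. \<forall>c r. 0 < r \<longrightarrow> r < \<delta> \<longrightarrow> V (c, r) < \<epsilon>" if "\<epsilon> > 0" for \<epsilon>
  proof (intro exI[of _ "(\<epsilon> / C) powr (1 / \<alpha>)"] conjI allI impI)
    show "0 < (\<epsilon> / C) powr (1 / \<alpha>)" using that Cpos by simp
    fix c r assume r: "0 < r" "r < (\<epsilon> / C) powr (1 / \<alpha>)"
    have "r powr \<alpha> < ((\<epsilon> / C) powr (1 / \<alpha>)) powr \<alpha>"
      using r a0 by (intro powr_less_mono2) auto
    also have "\<dots> = \<epsilon> / C" using a0 that Cpos by (simp add: powr_powr)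
    finally have "C * r powr \<alpha> < \<epsilon>" using Cpos by (simp add: field_simps)
    then show "V (c, r) < \<epsilon>" using VC[OF r(1), of c] by linarith
  qed
  have pos: "(\<forall>c r. 0 < r \<longrightarrow> V (c, r) = 0) \<or> (\<forall>x. \<exists>r>0. 0 < V (x, r))"
  proof (cases "AE x in lebesgue. f x = 0")
    case True
    have "Ib c r = 0" for c r
      unfolding Ib_def set_lebesgue_integral_def
      by (rule integral_eq_zero_AE) (use True in \<open>auto elim!: eventually_mono\<close>)
    then show ?thesis using Veq by (auto simp: less_imp_le)
  next
    case False
    have "\<exists>r>0. 0 < V (x, r)" for x
    proof (rule ccontr)
      assume "\<not> ?thesis"
      then have nv: "V (x, r) \<le> 0" if "0 < r" for r using that by (meson not_le)
      have ib: "Ib x r = 0" if "0 < r" for r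
      proof -
        have p: "0 < \<omega> * r ^ d" using \<omega>pos that by simp
        have "0 < r powr \<alpha>" using that by simp
        have "r powr \<alpha> * (Ib x r / (\<omega> * r ^ d)) \<le> 0" using nv[OF that] Veq[of r x] that by simp
        moreover have "0 < r powr \<alpha> * (Ib x r / (\<omega> * r ^ d))" if "0 < Ib x r"
          using that p \<open>0 < r powr \<alpha>\<close> by (metis mult_pos_pos divide_pos_pos)
        ultimately show ?thesis using Ib0[of x r] by linarith
      qed
      have "AE y in lebesgue. indicator (ball x (real (Suc n))) y * \<bar>f y\<bar> = 0" for n
      proof -
        have int: "integrable lebesgue (\<lambda>y. indicator (ball x (real (Suc n))) y * \<bar>f y\<bar>)"
          using integrable_mult_indicator[OF ball_sets integrable_abs[OF fi]] by simp
        have "integral\<^sup>L lebesgue (\<lambda>y. indicator (ball x (real (Suc n))) y * \<bar>f y\<bar>) = 0"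
          using ib[of "real (Suc n)"] unfolding Ib_def set_lebesgue_integral_def by simp
        then show ?thesis
          using integral_nonneg_eq_0_iff_AE[OF int] by (simp add: indicator_def)
      qed
      then have "AE y in lebesgue. \<forall>n. indicator (ball x (real (Suc n))) y * \<bar>f y\<bar> = 0"
        by (subst AE_all_countable) blast
      then have "AE y in lebesgue. f y = 0"
      proof (rule eventually_mono)
        fix y assume h: "\<forall>n. indicator (ball x (real (Suc n))) y * \<bar>f y\<bar> = (0::real)"
        obtain n where "dist x y < real n" using reals_Archimedean2 by blast
        then have "y \<in> ball x (real (Suc n))" by simp
        then show "f y = 0" using h[rule_format, of n] by simp
      qed
      then show False using False by simp
    qed
    then show ?thesis by blast
  qed
  have cent: "(\<forall>x. \<bar>SUP i\<in>(\<lambda>r. (x, r)) ` {0<..}. ereal (V i)\<bar> \<noteq> \<infinity>) \<and>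
         locally_lipschitz (\<lambda>x. real_of_ereal (SUP i\<in>(\<lambda>r. (x, r)) ` {0<..}. ereal (V i)))"
  proof (rule sup_lipschitz_generic[where I = "\<lambda>x. (\<lambda>r. (x, r)) ` {0<..}" and V = V and rad = snd and B = Bd and N = d])
    show "(\<lambda>r. (x, r)) ` {0::real<..} \<noteq> {}" for x by (rule ne_cent)
    show "0 \<le> V i" if hi: "i \<in> (\<lambda>r. (x, r)) ` {0<..}" for x i
    proof -
      have "0 < snd i" using hi unfolding mem_cent by blast
      then show ?thesis using Vnn[of "snd i" "fst i"] by simp
    qed
    show "V i \<le> Bd" if hi: "i \<in> (\<lambda>r. (x, r)) ` {0<..}" for x i
    proof -
      have "0 < snd i" using hi unfolding mem_cent by blast
      then show ?thesis using Vbd[of "snd i" "fst i"] by simp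
    qed
    show "0 < snd i" if hi: "i \<in> (\<lambda>r. (x, r)) ` {0<..}" for x :: 'a and i :: "'a \<times> real"
      using hi unfolding mem_cent by blast
    show "\<exists>\<delta>>0. \<forall>x. \<forall>i\<in>(\<lambda>r. (x, r)) ` {0<..}. snd i < \<delta> \<longrightarrow> V i < \<epsilon>" if eps: "\<epsilon> > 0" for \<epsilon>
    proof -
      obtain \<delta> where d0: "\<delta> > 0" and dd: "\<forall>c r. 0 < r \<longrightarrow> r < \<delta> \<longrightarrow> V (c, r) < \<epsilon>"
        using small[OF eps] by blast
      have "\<forall>x. \<forall>i\<in>(\<lambda>r. (x, r)) ` {0<..}. snd i < \<delta> \<longrightarrow> V i < \<epsilon>"
      proof (intro allI ballI impI)
        fix x :: 'a and i :: "'a \<times> real" assume "i \<in> (\<lambda>r. (x, r)) ` {0<..}" "snd i < \<delta>"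
        then show "V i < \<epsilon>" using dd[rule_format, of "snd i" "fst i"] unfolding mem_cent by (cases i) simp
      qed
      then show ?thesis using d0 by blast
    qed
    show "\<exists>j\<in>(\<lambda>r. (y, r)) ` {0<..}. (snd i / (snd i + dist x y)) ^ d * V i \<le> V j"
      if hi: "i \<in> (\<lambda>r. (x, r)) ` {0<..}" for x y i
    proof -
      define r where "r = snd i"
      have i: "i = (x, r)" "0 < r" using hi unfolding mem_cent r_def by (auto simp: prod_eq_iff)
      have "ball x r \<subseteq> ball y (r + dist x y)"
      proof
        fix z assume "z \<in> ball x r"
        then have "dist x z < r" by simp
        then have "dist y z < r + dist x y" using dist_triangle[of y z x] dist_commute[of y x] by linarith
        then show "z \<in> ball y (r + dist x y)" by simp
      qed
      then have le: "(r / (r + dist x y)) ^ d * V (x, r) \<le> V (y, r + dist x y)"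
        using i(2) zero_le_dist[of x y] by (intro Vtr) auto
      have mem: "(y, r + dist x y) \<in> (\<lambda>r. (y, r)) ` {0<..}"
        unfolding mem_cent using i(2) by (simp add: add_pos_nonneg)
      show ?thesis using le mem unfolding i(1) by (intro bexI[of _ "(y, r + dist x y)"]) simp_all
    qed
    show "(\<forall>x. \<forall>i\<in>(\<lambda>r. (x, r)) ` {0<..}. V i = 0) \<or> (\<forall>x. \<exists>i\<in>(\<lambda>r. (x, r)) ` {0<..}. 0 < V i)"
      using pos
    proof
      assume h: "\<forall>c r. 0 < r \<longrightarrow> V (c, r) = 0"
      have "\<forall>x. \<forall>i\<in>(\<lambda>r. (x, r)) ` {0<..}. V i = 0"
      proof (intro allI ballI)
        fix x :: 'a and i :: "'a \<times> real" assume "i \<in> (\<lambda>r. (x, r)) ` {0<..}"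
        then show "V i = 0" using h[rule_format, of "snd i" "fst i"] unfolding mem_cent by (cases i) simp
      qed
      then show ?thesis by blast
    next
      assume h: "\<forall>x. \<exists>r>0. 0 < V (x, r)"
      have "\<forall>x. \<exists>i\<in>(\<lambda>r. (x, r)) ` {0<..}. 0 < V i"
      proof
        fix x obtain r where r: "0 < r" "0 < V (x, r)" using h by blast
        have "(x, r) \<in> (\<lambda>r. (x, r)) ` {0<..}" unfolding mem_cent using r by simp
        then show "\<exists>i\<in>(\<lambda>r. (x, r)) ` {0<..}. 0 < V i" using r by blast
      qed
      then show ?thesis by blast
    qed
  qed
  have unc: "(\<forall>x. \<bar>SUP i\<in>{(c, r). 0 < r \<and> x \<in> ball c r}. ereal (V i)\<bar> \<noteq> \<infinity>) \<and>
         locally_lipschitz (\<lambda>x. real_of_ereal (SUP i\<in>{(c, r). 0 < r \<and> x \<in> ball c r}. ereal (V i)))"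
  proof (rule sup_lipschitz_generic[where I = "\<lambda>x. {(c, r). 0 < r \<and> x \<in> ball c r}" and V = V and rad = snd and B = Bd and N = d])
    show "{(c, r). 0 < r \<and> x \<in> ball c r} \<noteq> {}" for x by (rule ne_unc)
    show "0 \<le> V i" if hi: "i \<in> {(c, r). 0 < r \<and> x \<in> ball c r}" for x i
    proof -
      have "0 < snd i" using hi unfolding mem_unc by blast
      then show ?thesis using Vnn[of "snd i" "fst i"] by simp
    qed
    show "V i \<le> Bd" if hi: "i \<in> {(c, r). 0 < r \<and> x \<in> ball c r}" for x i
    proof -
      have "0 < snd i" using hi unfolding mem_unc by blast
      then show ?thesis using Vbd[of "snd i" "fst i"] by simp
    qed
    show "0 < snd i" if hi: "i \<in> {(c, r). 0 < r \<and> x \<in> ball c r}" for x :: 'a and i :: "'a \<times> real"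
      using hi unfolding mem_unc by blast
    show "\<exists>\<delta>>0. \<forall>x. \<forall>i\<in>{(c, r). 0 < r \<and> x \<in> ball c r}. snd i < \<delta> \<longrightarrow> V i < \<epsilon>" if eps: "\<epsilon> > 0" for \<epsilon>
    proof -
      obtain \<delta> where d0: "\<delta> > 0" and dd: "\<forall>c r. 0 < r \<longrightarrow> r < \<delta> \<longrightarrow> V (c, r) < \<epsilon>"
        using small[OF eps] by blast
      have "\<forall>x. \<forall>i\<in>{(c, r). 0 < r \<and> x \<in> ball c r}. snd i < \<delta> \<longrightarrow> V i < \<epsilon>"
      proof (intro allI ballI impI)
        fix x :: 'a and i :: "'a \<times> real" assume "i \<in> {(c, r). 0 < r \<and> x \<in> ball c r}" "snd i < \<delta>"
        then show "V i < \<epsilon>" using dd[rule_format, of "snd i" "fst i"] unfolding mem_unc by (cases i) simp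
      qed
      then show ?thesis using d0 by blast
    qed
    show "\<exists>j\<in>{(c, r). 0 < r \<and> y \<in> ball c r}. (snd i / (snd i + dist x y)) ^ d * V i \<le> V j"
      if hi: "i \<in> {(c, r). 0 < r \<and> x \<in> ball c r}" for x y i
    proof -
      define r where "r = snd i"
      define c where "c = fst i"
      have i: "i = (c, r)" "0 < r" "dist c x < r" using hi unfolding mem_unc r_def c_def by simp_all
      have "ball c r \<subseteq> ball c (r + dist x y)" using zero_le_dist[of x y] by (intro subset_ball) linarith
      then have le: "(r / (r + dist x y)) ^ d * V (c, r) \<le> V (c, r + dist x y)"
        using i(2) zero_le_dist[of x y] by (intro Vtr) auto
      have "dist c y < r + dist x y" using i(3) dist_triangle[of c y x] by linarith
      then have mem: "(c, r + dist x y) \<in> {(c, r). 0 < r \<and> y \<in> ball c r}"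
        unfolding mem_unc using i(2) by (simp add: add_pos_nonneg)
      show ?thesis using le mem unfolding i(1) by (intro bexI[of _ "(c, r + dist x y)"]) simp_all
    qed
    show "(\<forall>x. \<forall>i\<in>{(c, r). 0 < r \<and> x \<in> ball c r}. V i = 0) \<or> (\<forall>x. \<exists>i\<in>{(c, r). 0 < r \<and> x \<in> ball c r}. 0 < V i)"
      using pos
    proof
      assume h: "\<forall>c r. 0 < r \<longrightarrow> V (c, r) = 0"
      have "\<forall>x. \<forall>i\<in>{(c, r). 0 < r \<and> x \<in> ball c r}. V i = 0"
      proof (intro allI ballI)
        fix x :: 'a and i :: "'a \<times> real" assume "i \<in> {(c, r). 0 < r \<and> x \<in> ball c r}"
        then show "V i = 0" using h[rule_format, of "snd i" "fst i"] unfolding mem_unc by (cases i) simp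
      qed
      then show ?thesis by blast
    next
      assume h: "\<forall>x. \<exists>r>0. 0 < V (x, r)"
      have "\<forall>x. \<exists>i\<in>{(c, r). 0 < r \<and> x \<in> ball c r}. 0 < V i"
      proof
        fix x obtain r where r: "0 < r" "0 < V (x, r)" using h by blast
        have "(x, r) \<in> {(c, r). 0 < r \<and> x \<in> ball c r}" unfolding mem_unc using r by simp
        then show "\<exists>i\<in>{(c, r). 0 < r \<and> x \<in> ball c r}. 0 < V i" using r by blast
      qed
      then show ?thesis by blast
    qed
  qed
  have e1: "frac_max_centered \<alpha> f x = (SUP i\<in>(\<lambda>r. (x, r)) ` {0<..}. ereal (V i))" for x
    unfolding frac_max_centered_def V_def by (simp add: image_comp)
  have e2: "frac_max_uncentered \<alpha> f x = (SUP i\<in>{(c, r). 0 < r \<and> x \<in> ball c r}. ereal (V i))" for x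
    unfolding frac_max_uncentered_def V_def by (simp add: case_prod_beta')
  show ?thesis using cent unc unfolding e1 e2 by blast
qed

end
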